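(* Let $\{\mathbf{x}^k\}$ be generated by Algorithm 2 under the bounded-delay assumption, and let $k\ge0$. Then for any $\alpha>0$ and any $\mathbf{x}$ independent of $i_k$, $$\begin{aligned}\mathbb{E}_{i_k}\big\langle\nabla_{i_k} f(\hat{\mathbf{x}}^k),\mathbf{x}_{i_k}^{k+1}-\mathbf{x}_{i_k}\big\rangle\ge\ &\mathbb{E}_{i_k}\big[f(\mathbf{x}^{k+1})-f(\mathbf{x})\big]-\Big(1-\frac1m\Big)\big[f(\mathbf{x}^k)-f(\mathbf{x})\big]-\tfrac12\mathbb{E}_{i_k}\|\mathbf{x}^{k+1}-\mathbf{x}^k\|_{\mathbf{L}+\alpha L_c\mathbf{I}}^2\\&-\frac{\kappa L_r\tau/\alpha+2L_r\tau}{2m}\sum_{d=k-\tau}^{k-1}\|\mathbf{x}^{d+1}-\mathbf{x}^d\|^2-\frac{1}{2m}\sum_{d=k-\tau}^{k-1}\|\mathbf{x}^{d+1}-\mathbf{x}^d\|_{\mathbf{L}}^2,\end{aligned}$$ where $L_c=\max_iL_i$, $\kappa=L_r/L_c$, and $\mathbf{x}^d:=\mathbf{x}^0$ for $d<0$.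
   Context: Problem: $\min_{\mathbf{x}} F(\mathbf{x}):=f(\mathbf{x})+g(\mathbf{x})$ s.t. $\mathbf{A}\mathbf{x}=\mathbf{b}$, where $\mathbf{x}=(\mathbf{x}_1;\ldots;\mathbf{x}_m)$ with blocks $\mathbf{x}_i\in\mathbb{R}^{n_i}$, $g(\mathbf{x})=\sum_{i=1}^m g_i(\mathbf{x}_i)$, $\mathbf{A}=[\mathbf{A}_1,\ldots,\mathbf{A}_m]$ with $\mathbf{A}_i\in\mathbb{R}^{q\times n_i}$, $\mathbf{b}\in\mathbb{R}^q$; $f$ is convex and continuously differentiable, each $g_i$ is proper, convex, lower semicontinuous. $\mathbf{U}_i\mathbf{y}$ denotes the vector whose $i$-th block is $\mathbf{y}_i$ and other blocks zero; $\|\mathbf{z}\|_{\mathbf{M}}^2=\mathbf{z}^\top\mathbf{M}\mathbf{z}$. Assumption (gradient Lipschitz continuity): there are constants $L_i>0$ and $L_r$ with $\|\nabla_i f(\mathbf{x}+\mathbf{U}_i\mathbf{y})-\nabla_i f(\mathbf{x})\|\le L_i\|\mathbf{y}_i\|$ and $\|\nabla f(\mathbf{x}+\mathbf{U}_i\mathbf{y})-\nabla f(\mathbf{x})\|\le L_r\|\mathbf{y}_i\|$ for all $i,\mathbf{x},\mathbf{y}$. $\mathbf{L}=\mathrm{blkdiag}(L_1\mathbf{I}_{n_1},\ldots,L_m\mathbf{I}_{n_m})$. Algorithm 2 (async-parallel randomized primal-dual block update, as analyzed): choose $\mathbf{x}^0$, $\boldsymbol{\lambda}^0=\mathbf{0}$,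 $\mathbf{r}^0=\mathbf{A}\mathbf{x}^0-\mathbf{b}$, $\beta>0,\rho>0$, symmetric PSD $\mathbf{P}_i$. At iteration $k$, a block index $i_k\in\{1,\ldots,m\}$ and a (possibly outdated) point $\hat{\mathbf{x}}^k$ are used; $\mathbf{x}_i^{k+1}=\mathbf{x}_i^k$ for $i\ne i_k$ and $$\mathbf{x}_{i_k}^{k+1}\in\arg\min_{\mathbf{x}_{i_k}}\big\langle\nabla_{i_k} f(\hat{\mathbf{x}}^k)-\mathbf{A}_{i_k}^\top(\boldsymbol{\lambda}^k-\beta\mathbf{r}^k),\mathbf{x}_{i_k}\big\rangle+g_{i_k}(\mathbf{x}_{i_k})+\tfrac12\|\mathbf{x}_{i_k}-\mathbf{x}_{i_k}^k\|_{\mathbf{P}_{i_k}}^2;$$ then $\mathbf{r}^{k+1}=\mathbf{r}^k+\mathbf{A}_{i_k}(\mathbf{x}_{i_k}^{k+1}-\mathbf{x}_{i_k}^k)$ and $\boldsymbol{\lambda}^{k+1}=\boldsymbol{\lambda}^k-\rho\mathbf{r}^{k+1}$. Conditionally on the history before iteration $k$ (which determines $\mathbf{x}^k,\mathbf{r}^k,\boldsymbol{\lambda}^k$ and $\hat{\mathbf{x}}^k$), $i_k$ is uniformly distributed on $\{1,\ldots,m\}$; $\mathbb{E}_{i_k}$ denotes this conditional expectation, and "$\mathbf{x}$ independent of $i_k$" means $\mathbf{x}$ is determined by that history. Assumption (bounded delay): there is an integer $\tau\ge0$ such that $\hat{\mathbf{x}}^k=\mathbf{x}^k+\sum_{d\in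 J(k)}(\mathbf{x}^d-\mathbf{x}^{d+1})$ for some subset $J(k)\subseteq\{k-\tau,\ldots,k-1\}$. *)

theory Defs
  imports "HOL-Analysis.Analysis"
begin

text \<open>Block structure: coordinates of the ambient space real^'n are assigned to
  blocks 0..m-1 by blk.  A block vector y_i is represented as a full vector that
  vanishes outside block i.\<close>

definition blockproj :: "('n::finite \<Rightarrow> nat) \<Rightarrow> nat \<Rightarrow> real^'n \<Rightarrow> real^'n" where
  "blockproj blk i y = (\<chi> j. if blk j = i then y $ j else 0)"

definition wnorm2 :: "('n::finite \<Rightarrow> real) \<Rightarrow> real^'n \<Rightarrow> real" where
  "wnorm2 w z = (\<Sum>j\<in>UNIV. w j * (z $ j)^2)"

definition proper_fun :: "('a \<Rightarrow> ereal) \<Rightarrow> bool" where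
  "proper_fun g \<longleftrightarrow> (\<exists>y. g y < \<infinity>) \<and> (\<forall>y. g y > -\<infinity>)"

definition ereal_convex :: "('a::real_vector \<Rightarrow> ereal) \<Rightarrow> bool" where
  "ereal_convex g \<longleftrightarrow> (\<forall>x y (t::real). 0 \<le> t \<and> t \<le> 1 \<longrightarrow>
     g (t *\<^sub>R x + (1 - t) *\<^sub>R y) \<le> ereal t * g x + ereal (1 - t) * g y)"

definition ereal_lsc :: "('a::topological_space \<Rightarrow> ereal) \<Rightarrow> bool" where
  "ereal_lsc g \<longleftrightarrow> (\<forall>c. closed {y. g y \<le> c})"

text \<open>One block update of Algorithm 2: given current x, delayed xhat, residual r,
  multiplier lam and block i, the new point xn agrees with x off block i and its
  block i minimizes the prox-linearized objective.\<close>
definition block_update ::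
  "('n::finite \<Rightarrow> nat) \<Rightarrow> (real^'n \<Rightarrow> real^'n) \<Rightarrow> real^'n^'q \<Rightarrow> real
   \<Rightarrow> (nat \<Rightarrow> real^'n^'n) \<Rightarrow> (nat \<Rightarrow> real^'n \<Rightarrow> ereal)
   \<Rightarrow> nat \<Rightarrow> real^'n \<Rightarrow> real^'n \<Rightarrow> real^'q \<Rightarrow> real^'q \<Rightarrow> real^'n \<Rightarrow> bool" where
  "block_update blk gf A \<beta> P g i x xhat r lam xn \<longleftrightarrow>
     (let G = gf xhat - transpose A *v (lam - \<beta> *\<^sub>R r);
          obj = (\<lambda>w. ereal (blockproj blk i G \<bullet> w
                 + (1/2) * (blockproj blk i (w - x) \<bullet> (P i *v blockproj blk i (w - x))))
                 + g i w)
      in (\<forall>j. blk j \<noteq> i \<longrightarrow> xn $ j = x $ j) \<and>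
         (\<forall>w. (\<forall>j. blk j \<noteq> i \<longrightarrow> w $ j = x $ j) \<longrightarrow> obj xn \<le> obj w))"

end

theory Submission
  imports Defs
begin


lemma line_deriv:
  fixes f :: "'a::real_inner \<Rightarrow> real"
  assumes "\<forall>w. (f has_derivative (\<lambda>h. gf w \<bullet> h)) (at w)"
  shows "((\<lambda>t. f (u + t *\<^sub>R h)) has_real_derivative (gf (u + t *\<^sub>R h) \<bullet> h)) (at t within S)"
proof -
  have i: "((\<lambda>t. u + t *\<^sub>R h) has_derivative (\<lambda>s. s *\<^sub>R h)) (at t within S)"
    by (auto intro!: derivative_eq_intros)
  have "((\<lambda>t. f (u + t *\<^sub>R h)) has_derivative (\<lambda>s. gf (u + t *\<^sub>R h) \<bullet> (s *\<^sub>R h))) (at t within S)"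
    using has_derivative_compose[OF i] assms by blast
  then show ?thesis
    by (rule has_derivative_imp_has_field_derivative) (simp add: mult.commute)
qed

lemma descent:
  fixes f :: "'a::real_inner \<Rightarrow> real"
  assumes d: "\<forall>w. (f has_derivative (\<lambda>h. gf w \<bullet> h)) (at w)"
    and b: "\<forall>t. 0 \<le> t \<and> t \<le> 1 \<longrightarrow> (gf (u + t *\<^sub>R h) - gf u) \<bullet> h \<le> t * C"
  shows "f (u + h) \<le> f u + gf u \<bullet> h + C/2"
proof -
  define \<psi> where "\<psi> t = f (u + t *\<^sub>R h) - t * (gf u \<bullet> h) - t^2 * C / 2" for t
  have "\<psi> 1 \<le> \<psi> 0"
  proof (rule DERIV_nonpos_imp_nonincreasing[of 0 1 \<psi>])
    show "0 \<le> (1::real)" by simp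
    fix t :: real assume t: "0 \<le> t" "t \<le> 1"
    have "(\<psi> has_real_derivative (gf (u + t *\<^sub>R h) \<bullet> h - gf u \<bullet> h - (2 * t) * C / 2)) (at t)"
      unfolding \<psi>_def[abs_def]
      by (auto intro!: derivative_eq_intros line_deriv[OF d] simp: power2_eq_square)
    moreover have "gf (u + t *\<^sub>R h) \<bullet> h - gf u \<bullet> h - (2 * t) * C / 2 \<le> 0"
      using b t by (simp add: inner_diff_left)
    ultimately show "\<exists>y. DERIV \<psi> t :> y \<and> y \<le> 0" by blast
  qed
  then show ?thesis unfolding \<psi>_def by simp
qed

lemma tangent:
  fixes f :: "'a::real_inner \<Rightarrow> real"
  assumes c: "convex_on UNIV f" and d: "\<forall>w. (f has_derivative (\<lambda>h. gf w \<bullet> h)) (at w)"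
  shows "f z \<ge> f u + gf u \<bullet> (z - u)"
proof -
  define \<phi> where "\<phi> t = f (u + t *\<^sub>R (z - u))" for t
  have cv: "convex_on UNIV \<phi>"
  proof (rule convex_onI)
    fix t a b :: real assume "t > 0" "t < 1"
    have "\<phi> ((1 - t) *\<^sub>R a + t *\<^sub>R b) = f ((1 - t) *\<^sub>R (u + a *\<^sub>R (z - u)) + t *\<^sub>R (u + b *\<^sub>R (z - u)))"
      unfolding \<phi>_def by (simp add: algebra_simps)
    also have "\<dots> \<le> (1 - t) * \<phi> a + t * \<phi> b"
      unfolding \<phi>_def using convex_onD[OF c, of t] \<open>t>0\<close> \<open>t<1\<close> by simp
    finally show "\<phi> ((1 - t) *\<^sub>R a + t *\<^sub>R b) \<le> (1 - t) * \<phi> a + t * \<phi> b" .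
  qed simp
  have "\<phi> 1 - \<phi> 0 \<ge> (gf u \<bullet> (z - u)) * (1 - 0)"
    apply (rule convex_on_imp_above_tangent[OF cv])
    using line_deriv[OF d, of u "z - u" 0 UNIV] by (auto simp: \<phi>_def[abs_def])
  then show ?thesis by (simp add: \<phi>_def)
qed



lemma bp_nth: "blockproj blk i v $ j = (if blk j = i then v $ j else 0)"
  by (simp add: blockproj_def)

lemma bp_supp: "(\<forall>j. blk j \<noteq> i \<longrightarrow> v $ j = 0) \<Longrightarrow> blockproj blk i v = v"
  by (auto simp: vec_eq_iff bp_nth)

lemma bp_diff: "blockproj blk i (v - w) = blockproj blk i v - blockproj blk i w"
  by (auto simp: vec_eq_iff bp_nth)

lemma bp_scale: "blockproj blk i (c *\<^sub>R v) = c *\<^sub>R blockproj blk i v"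
  by (auto simp: vec_eq_iff bp_nth)

lemma bp_inner: "blockproj blk i w \<bullet> v = w \<bullet> blockproj blk i v"
  unfolding inner_vec_def by (intro sum.cong) (auto simp: bp_nth)

lemma norm2_vec: "(norm (w::real^'n::finite))^2 = (\<Sum>j\<in>UNIV. (w$j)^2)"
  by (simp only: power2_norm_eq_inner) (simp add: inner_vec_def power2_eq_square)

lemma bp_sum:
  assumes "\<forall>j. blk j < m"
  shows "(\<Sum>i<m. blockproj blk i w) = w"
proof -
  have "(\<Sum>i<m. blockproj blk i w) $ j = w $ j" for j
  proof -
    have "(\<Sum>i<m. blockproj blk i w) $ j = (\<Sum>i<m. if blk j = i then w $ j else 0)"
      by (simp add: sum_component bp_nth)
    also have "\<dots> = w $ j" using assms by (simp add: sum.delta')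
    finally show ?thesis .
  qed
  then show ?thesis by (simp add: vec_eq_iff)
qed

lemma bp_norm_sum:
  assumes "\<forall>j. blk j < m"
  shows "(\<Sum>i<m. (norm (blockproj blk i w))^2) = (norm w)^2"
proof -
  have "(\<Sum>i<m. (norm (blockproj blk i w))^2) = (\<Sum>i<m. \<Sum>j\<in>UNIV. (if blk j = i then (w$j)^2 else 0))"
    unfolding norm2_vec by (intro sum.cong refl) (auto simp: bp_nth)
  also have "\<dots> = (\<Sum>j\<in>UNIV. \<Sum>i<m. (if blk j = i then (w$j)^2 else 0))"
    by (rule sum.swap)
  also have "\<dots> = (\<Sum>j\<in>UNIV. (w$j)^2)" using assms by (simp add: sum.delta')
  also have "\<dots> = (norm w)^2"
    by (simp add: norm2_vec)
  finally show ?thesis .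
qed

lemma wnorm2_block:
  assumes "\<forall>j. blk j \<noteq> i \<longrightarrow> v $ j = 0"
  shows "wnorm2 (\<lambda>j. c (blk j)) v = c i * (norm v)^2"
proof -
  have "wnorm2 (\<lambda>j. c (blk j)) v = (\<Sum>j\<in>UNIV. c i * (v$j)^2)"
    unfolding wnorm2_def using assms by (intro sum.cong) auto
  also have "\<dots> = c i * (norm v)^2"
    by (simp add: norm2_vec sum_distrib_left)
  finally show ?thesis .
qed

lemma wnorm2_nonneg: "(\<forall>j. 0 \<le> w j) \<Longrightarrow> 0 \<le> wnorm2 w v"
  unfolding wnorm2_def by (intro sum_nonneg) auto

lemma lip_sum:
  fixes gf :: "real^'n::finite \<Rightarrow> real^'n"
  assumes lip: "\<forall>i<m. \<forall>u v. norm (gf (u + blockproj blk i v) - gf u) \<le> Lr * norm (blockproj blk i v)"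
    and fin: "finite J"
    and supp: "\<forall>d\<in>J. ib d < m \<and> blockproj blk (ib d) (V d) = V d"
  shows "norm (gf (u + (\<Sum>d\<in>J. V d)) - gf u) \<le> Lr * (\<Sum>d\<in>J. norm (V d))"
  using fin supp
proof (induction J arbitrary: u rule: finite_induct)
  case empty then show ?case by simp
next
  case (insert a F)
  have "gf (u + (\<Sum>d\<in>insert a F. V d)) - gf u
        = (gf ((u + (\<Sum>d\<in>F. V d)) + blockproj blk (ib a) (V a)) - gf (u + (\<Sum>d\<in>F. V d)))
          + (gf (u + (\<Sum>d\<in>F. V d)) - gf u)"
    using insert by (simp add: algebra_simps)
  also have "norm \<dots> \<le> Lr * norm (V a) + Lr * (\<Sum>d\<in>F. norm (V d))"
  proof (rule norm_triangle_le[OF add_mono])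
    show "norm (gf ((u + (\<Sum>d\<in>F. V d)) + blockproj blk (ib a) (V a)) - gf (u + (\<Sum>d\<in>F. V d))) \<le> Lr * norm (V a)"
      using lip insert.prems by (metis insert_iff)
    show "norm (gf (u + (\<Sum>d\<in>F. V d)) - gf u) \<le> Lr * (\<Sum>d\<in>F. norm (V d))"
      using insert by auto
  qed
  finally show ?case using insert by (simp add: algebra_simps)
qed

lemma young: fixes p q c :: real assumes "c > 0"
  shows "p * q \<le> c/2 * q^2 + p^2 / (2*c)"
proof -
  have "0 \<le> (c*q - p)^2" by simp
  hence "2*c*(p*q) \<le> c*c*q^2 + p^2" by (simp add: power2_eq_square algebra_simps)
  hence "(2*c*(p*q))/(2*c) \<le> (c*c*q^2 + p^2)/(2*c)" using assms by (intro divide_right_mono) auto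
  moreover have "(2*c*(p*q))/(2*c) = p*q" using assms by simp
  moreover have "(c*c*q^2 + p^2)/(2*c) = c/2 * q^2 + p^2 / (2*c)" using assms by (simp add: field_simps)
  ultimately show ?thesis by simp
qed

theorem mainTheorem9:
  fixes m :: nat and blk :: "'n::finite \<Rightarrow> nat"
    and f :: "real^'n \<Rightarrow> real" and gf :: "real^'n \<Rightarrow> real^'n"
    and g :: "nat \<Rightarrow> real^'n \<Rightarrow> ereal"
    and A :: "real^'n^'q::finite" and b :: "real^'q"
    and P :: "nat \<Rightarrow> real^'n^'n"
    and L :: "nat \<Rightarrow> real" and Lr :: real
    and \<beta> \<rho> \<alpha> :: real and \<tau> k :: nat
    and x :: "nat \<Rightarrow> real^'n" and xhat :: "nat \<Rightarrow> real^'n"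
    and r lam :: "nat \<Rightarrow> real^'q"
    and idx :: "nat \<Rightarrow> nat" and J :: "nat \<Rightarrow> nat set"
    and y :: "nat \<Rightarrow> real^'n" and z :: "real^'n"
  assumes blk_range: "\<forall>j. blk j < m"
    and f_convex: "convex_on UNIV f"
    and f_grad: "\<forall>u. (f has_derivative (\<lambda>h. gf u \<bullet> h)) (at u)"
    and gf_cont: "continuous_on UNIV gf"
    and g_block: "\<forall>i<m. \<forall>w. g i w = g i (blockproj blk i w)"
    and g_proper: "\<forall>i<m. proper_fun (g i)"
    and g_convex: "\<forall>i<m. ereal_convex (g i)"
    and g_lsc: "\<forall>i<m. ereal_lsc (g i)"
    and L_pos: "\<forall>i<m. L i > 0"
    and Lip_block: "\<forall>i<m. \<forall>u v. norm (blockproj blk i (gf (u + blockproj blk i v) - gf u))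
                        \<le> L i * norm (blockproj blk i v)"
    and Lip_full: "\<forall>i<m. \<forall>u v. norm (gf (u + blockproj blk i v) - gf u)
                        \<le> Lr * norm (blockproj blk i v)"
    and P_sym: "\<forall>i<m. transpose (P i) = P i"
    and P_psd: "\<forall>i<m. \<forall>v. 0 \<le> v \<bullet> (P i *v v)"
    and \<beta>_pos: "\<beta> > 0" and \<rho>_pos: "\<rho> > 0" and \<alpha>_pos: "\<alpha> > 0"
    and r0: "r 0 = A *v x 0 - b"
    and lam0: "lam 0 = 0"
    and idx_range: "\<forall>j<k. idx j < m"
    and x_step: "\<forall>j<k. block_update blk gf A \<beta> P g (idx j) (x j) (xhat j) (r j) (lam j) (x (Suc j))"
    and r_step: "\<forall>j<k. r (Suc j) = r j + A *v (x (Suc j) - x j)"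
    and lam_step: "\<forall>j<k. lam (Suc j) = lam j - \<rho> *\<^sub>R r (Suc j)"
    and delay: "\<forall>j\<le>k. J j \<subseteq> {j - \<tau>..<j} \<and> xhat j = x j + (\<Sum>d\<in>J j. x d - x (Suc d))"
    and y_step: "\<forall>i<m. block_update blk gf A \<beta> P g i (x k) (xhat k) (r k) (lam k) (y i)"
  shows
    "(let Lc = Max (L ` {..<m}); \<kappa> = Lr / Lc;
          D = {int k - int \<tau>..<int k}
      in (1 / real m) * (\<Sum>i<m. blockproj blk i (gf (xhat k)) \<bullet> (y i - z))
         \<ge> (1 / real m) * (\<Sum>i<m. f (y i) - f z)
           - (1 - 1 / real m) * (f (x k) - f z)
           - (1/2) * ((1 / real m) * (\<Sum>i<m. wnorm2 (\<lambda>j. L (blk j) + \<alpha> * Lc) (y i - x k)))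
           - (\<kappa> * Lr * real \<tau> / \<alpha> + 2 * Lr * real \<tau>) / (2 * real m)
               * (\<Sum>d\<in>D. (norm (x (nat (d + 1)) - x (nat d)))^2)
           - (1 / (2 * real m)) * (\<Sum>d\<in>D. wnorm2 (\<lambda>j. L (blk j)) (x (nat (d + 1)) - x (nat d))))"
proof -
  have m_pos: "m > 0" using blk_range by (metis gr_zeroI less_nat_zero_code)
  define Lc where "Lc = Max (L ` {..<m})"
  have Lc_ge: "\<forall>i<m. L i \<le> Lc" unfolding Lc_def by (auto intro: Max_ge)
  have Lc_pos: "Lc > 0" using Lc_ge L_pos m_pos by (meson less_le_trans)
  have Lr_nn: "Lr \<ge> 0"
  proof -
    define j0 where "j0 = (undefined::'n)"
    define i0 where "i0 = blk j0"
    have i0m: "i0 < m" using blk_range i0_def by simp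
    have bpa: "blockproj blk i0 (axis j0 (1::real)) = axis j0 1"
      by (rule bp_supp) (auto simp: axis_def i0_def)
    have "norm (gf (0 + blockproj blk i0 (axis j0 1)) - gf 0) \<le> Lr * norm (blockproj blk i0 (axis j0 (1::real)))"
      using Lip_full i0m by blast
    then have "0 \<le> Lr * 1" using bpa by (metis norm_axis_1 norm_ge_zero order_trans)
    then show ?thesis by simp
  qed
  have \<alpha>Lc_pos: "\<alpha> * Lc > 0" using \<alpha>_pos Lc_pos by simp
  define G where "G = gf (xhat k)"
  define G0 where "G0 = gf (x k)"
  define a where "a = G - G0"
  define v where "v i = y i - x k" for i
  have vsupp: "\<forall>j. blk j \<noteq> i \<longrightarrow> v i $ j = 0" if "i < m" for i
    using y_step that unfolding block_update_def Let_def v_def by auto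
  have bpv: "blockproj blk i (v i) = v i" if "i < m" for i
    using vsupp[OF that] by (rule bp_supp)
  have Jsub: "J k \<subseteq> {k - \<tau>..<k}" and xh: "xhat k = x k + (\<Sum>d\<in>J k. x d - x (Suc d))"
    using delay by auto
  have finJ: "finite (J k)" using Jsub finite_subset by blast
  have cardJ: "card (J k) \<le> \<tau>"
  proof -
    have "card (J k) \<le> card {k - \<tau>..<k}" using Jsub by (intro card_mono) auto
    then show ?thesis by simp
  qed
  have Dsupp: "idx d < m \<and> blockproj blk (idx d) (x (Suc d) - x d) = x (Suc d) - x d" if "d \<in> J k" for d
  proof -
    have dk: "d < k" using that Jsub by auto
    have "\<forall>j. blk j \<noteq> idx d \<longrightarrow> x (Suc d) $ j = x d $ j"
      using x_step dk unfolding block_update_def Let_def by auto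
    then show ?thesis using idx_range dk by (auto intro!: bp_supp)
  qed
  define S where "S = (\<Sum>d\<in>J k. norm (x (Suc d) - x d))"
  have S_nn: "S \<ge> 0" unfolding S_def by (auto intro: sum_nonneg)
  have a_le: "norm a \<le> Lr * S"
  proof -
    have "norm (gf (x k + (\<Sum>d\<in>J k. x d - x (Suc d))) - gf (x k)) \<le> Lr * (\<Sum>d\<in>J k. norm (x d - x (Suc d)))"
    proof (intro lip_sum[OF Lip_full finJ, of idx] ballI conjI)
      fix d assume d: "d \<in> J k"
      show "idx d < m" using Dsupp[OF d] by simp
      have "x d - x (Suc d) = (-1) *\<^sub>R (x (Suc d) - x d)" by simp
      then show "blockproj blk (idx d) (x d - x (Suc d)) = x d - x (Suc d)"
        using Dsupp[OF d] by (metis bp_scale)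
    qed
    then show ?thesis unfolding a_def G_def G0_def S_def xh[symmetric] by (simp add: norm_minus_commute)
  qed
  define h where "h = x k - xhat k"
  have h_eq: "h = (\<Sum>d\<in>J k. x (Suc d) - x d)"
    unfolding h_def xh by (simp add: sum_negf[symmetric])
  have h_le: "norm h \<le> S" unfolding h_eq S_def by (rule norm_sum)
  have desc1: "f (x k) \<le> f (xhat k) + G \<bullet> h + Lr * S^2 / 2"
  proof -
    have "f (xhat k + h) \<le> f (xhat k) + gf (xhat k) \<bullet> h + (Lr * S^2) / 2"
    proof (rule descent[OF f_grad], intro allI impI)
      fix t :: real assume t: "0 \<le> t \<and> t \<le> 1"
      have th: "t *\<^sub>R h = (\<Sum>d\<in>J k. t *\<^sub>R (x (Suc d) - x d))" unfolding h_eq by (simp add: scaleR_sum_right)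
      have "norm (gf (xhat k + (\<Sum>d\<in>J k. t *\<^sub>R (x (Suc d) - x d))) - gf (xhat k)) \<le> Lr * (\<Sum>d\<in>J k. norm (t *\<^sub>R (x (Suc d) - x d)))"
        using Dsupp by (intro lip_sum[OF Lip_full finJ, of idx]) (auto simp: bp_scale)
      also have "\<dots> = Lr * t * S" using t by (simp add: S_def sum_distrib_left mult.assoc)
      finally have n1: "norm (gf (xhat k + t *\<^sub>R h) - gf (xhat k)) \<le> Lr * t * S" by (simp add: th)
      have "(gf (xhat k + t *\<^sub>R h) - gf (xhat k)) \<bullet> h \<le> norm (gf (xhat k + t *\<^sub>R h) - gf (xhat k)) * norm h"
        by (rule norm_cauchy_schwarz)
      also have "\<dots> \<le> (Lr * t * S) * S"
        using n1 h_le by (intro mult_mono) (use Lr_nn t S_nn in auto)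
      finally show "(gf (xhat k + t *\<^sub>R h) - gf (xhat k)) \<bullet> h \<le> t * (Lr * S^2)"
        by (simp add: power2_eq_square algebra_simps)
    qed
    then show ?thesis by (simp add: h_def G_def)
  qed
  have tang: "f z \<ge> f (xhat k) + G \<bullet> (z - xhat k)"
    unfolding G_def by (rule tangent[OF f_convex f_grad])
  have hG: "G \<bullet> (x k - z) \<ge> f (x k) - f z - Lr * S^2 / 2"
  proof -
    have "G \<bullet> (x k - z) = G \<bullet> h - G \<bullet> (z - xhat k)" unfolding h_def by (simp add: inner_diff_right)
    then show ?thesis using desc1 tang by linarith
  qed
  define c where "c = \<alpha> * Lc"
  define wn where "wn i = wnorm2 (\<lambda>j. L (blk j) + \<alpha> * Lc) (y i - x k)" for i
  have per: "blockproj blk i G \<bullet> (y i - z) \<ge> f (y i) - f (x k) - wn i / 2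
             - (norm (blockproj blk i a))^2 / (2 * c) + blockproj blk i G \<bullet> (x k - z)" if im: "i < m" for i
  proof -
    have e1: "blockproj blk i G \<bullet> (y i - z) = G \<bullet> v i + blockproj blk i G \<bullet> (x k - z)"
    proof -
      have "y i - z = v i + (x k - z)" by (simp add: v_def)
      then have "blockproj blk i G \<bullet> (y i - z) = blockproj blk i G \<bullet> v i + blockproj blk i G \<bullet> (x k - z)"
        by (simp only: inner_add_right)
      moreover have "blockproj blk i G \<bullet> v i = G \<bullet> v i" using bpv[OF im] by (simp add: bp_inner)
      ultimately show ?thesis by simp
    qed
    have e2: "G \<bullet> v i = G0 \<bullet> v i + blockproj blk i a \<bullet> v i"
      using bpv[OF im] by (simp add: a_def bp_inner inner_diff_left)
    have desc: "f (x k + v i) \<le> f (x k) + gf (x k) \<bullet> v i + (L i * (norm (v i))^2) / 2"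
    proof (rule descent[OF f_grad], intro allI impI)
      fix t :: real assume t: "0 \<le> t \<and> t \<le> 1"
      have tv: "t *\<^sub>R v i = blockproj blk i (t *\<^sub>R v i)" using bpv[OF im] by (simp add: bp_scale)
      have "(gf (x k + t *\<^sub>R v i) - gf (x k)) \<bullet> v i = blockproj blk i (gf (x k + blockproj blk i (t *\<^sub>R v i)) - gf (x k)) \<bullet> v i"
        using bpv[OF im] tv by (simp add: bp_inner)
      also have "\<dots> \<le> norm (blockproj blk i (gf (x k + blockproj blk i (t *\<^sub>R v i)) - gf (x k))) * norm (v i)"
        by (rule norm_cauchy_schwarz)
      also have "\<dots> \<le> (L i * norm (blockproj blk i (t *\<^sub>R v i))) * norm (v i)"
        using Lip_block im by (intro mult_right_mono) auto
      also have "\<dots> = t * (L i * (norm (v i))^2)"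
        using t tv[symmetric] by (simp add: power2_eq_square)
      finally show "(gf (x k + t *\<^sub>R v i) - gf (x k)) \<bullet> v i \<le> t * (L i * (norm (v i))^2)" .
    qed
    have yi: "y i = x k + v i" by (simp add: v_def)
    have yng: "blockproj blk i a \<bullet> v i \<ge> - (c/2 * (norm (v i))^2 + (norm (blockproj blk i a))^2 / (2 * c))"
    proof -
      have "- (blockproj blk i a \<bullet> v i) \<le> norm (blockproj blk i a) * norm (v i)"
        using norm_cauchy_schwarz[of "- blockproj blk i a" "v i"] by simp
      also have "\<dots> \<le> c/2 * (norm (v i))^2 + (norm (blockproj blk i a))^2 / (2 * c)"
        by (rule young) (simp add: c_def \<alpha>Lc_pos)
      finally show ?thesis by linarith
    qed
    have wni: "wn i = (L i + \<alpha> * Lc) * (norm (v i))^2"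
      unfolding wn_def v_def[symmetric]
      using wnorm2_block[OF vsupp[OF im], of "\<lambda>i. L i + \<alpha> * Lc"] by simp
    show ?thesis
      using e1 e2 desc yng wni unfolding yi[symmetric] G0_def[symmetric] c_def
      by (simp add: field_simps)
  qed
  define D where "D = {int k - int \<tau>..<int k}"
  define T where "T = (\<Sum>d\<in>D. (norm (x (nat (d + 1)) - x (nat d)))^2)"
  define TL where "TL = (\<Sum>d\<in>D. wnorm2 (\<lambda>j. L (blk j)) (x (nat (d + 1)) - x (nat d)))"
  have T_nn: "T \<ge> 0" unfolding T_def by (auto intro: sum_nonneg)
  have TL_nn: "TL \<ge> 0" unfolding TL_def
    using L_pos blk_range by (intro sum_nonneg wnorm2_nonneg) (auto intro: less_imp_le)
  have SJ: "(\<Sum>d\<in>J k. (norm (x (Suc d) - x d))^2) \<le> T"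
  proof -
    have "(\<Sum>d\<in>J k. (norm (x (Suc d) - x d))^2) = (\<Sum>d\<in>int ` J k. (norm (x (nat (d + 1)) - x (nat d)))^2)"
    proof -
      have aux: "nat (int n + 1) = Suc n" for n by arith
      show ?thesis by (subst sum.reindex) (auto simp: inj_on_def aux)
    qed
    also have "\<dots> \<le> T" unfolding T_def
    proof (rule sum_mono2)
      show "finite D" by (simp add: D_def)
      show "int ` J k \<subseteq> D"
      proof
        fix e assume "e \<in> int ` J k"
        then obtain d where d: "d \<in> J k" "e = int d" by blast
        then have "k - \<tau> \<le> d" "d < k" using Jsub by auto
        then show "e \<in> D" using d by (simp add: D_def)
      qed
    qed auto
    finally show ?thesis .
  qed
  have S2T: "S^2 \<le> real \<tau> * T"
  proof -
    have "S^2 \<le> (\<Sum>d\<in>J k. (norm (x (Suc d) - x d))^2) * real (card (J k))"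
      unfolding S_def by (rule sum_squared_le_sum_of_squares)
    also have "\<dots> \<le> T * real \<tau>"
      using SJ cardJ T_nn by (intro mult_mono) (auto intro: sum_nonneg)
    finally show ?thesis by (simp add: mult.commute)
  qed
  have a2: "(norm a)^2 \<le> Lr^2 * S^2"
    using a_le by (metis norm_ge_zero power_mono power_mult_distrib)
  have E1: "Lr^2 * S^2 / (2 * c) \<le> (Lr / Lc * Lr * real \<tau> / \<alpha>) * T / 2"
  proof -
    have "Lr^2 * S^2 \<le> Lr^2 * (real \<tau> * T)" using S2T by (intro mult_left_mono) auto
    then have "Lr^2 * S^2 / (2 * c) \<le> Lr^2 * (real \<tau> * T) / (2 * c)"
      using \<alpha>Lc_pos c_def by (intro divide_right_mono) auto
    also have "\<dots> = (Lr / Lc * Lr * real \<tau> / \<alpha>) * T / 2"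
      using Lc_pos \<alpha>_pos by (simp add: c_def power2_eq_square field_simps)
    finally show ?thesis .
  qed
  have E1': "(norm a)^2 / (2 * c) \<le> Lr^2 * S^2 / (2 * c)"
    using a2 \<alpha>Lc_pos c_def by (intro divide_right_mono) auto
  have E2: "Lr * S^2 / 2 \<le> Lr * real \<tau> * T"
  proof -
    have "Lr * S^2 \<le> Lr * (real \<tau> * T)" using S2T Lr_nn by (intro mult_left_mono) auto
    moreover have "0 \<le> Lr * (real \<tau> * T)" using Lr_nn T_nn by simp
    ultimately show ?thesis by (simp add: mult.assoc)
  qed
  define Q where "Q = (\<Sum>i<m. f (y i)) - real m * f (x k) - (\<Sum>i<m. wn i) / 2 - (norm a)^2 / (2 * c) + G \<bullet> (x k - z)"
  have LQ: "(\<Sum>i<m. blockproj blk i G \<bullet> (y i - z)) \<ge> Q"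
  proof -
    have "(\<Sum>i<m. blockproj blk i G \<bullet> (y i - z)) \<ge> (\<Sum>i<m. f (y i) - f (x k) - wn i / 2
             - (norm (blockproj blk i a))^2 / (2 * c) + blockproj blk i G \<bullet> (x k - z))"
      by (rule sum_mono) (use per in auto)
    also have "(\<Sum>i<m. f (y i) - f (x k) - wn i / 2
             - (norm (blockproj blk i a))^2 / (2 * c) + blockproj blk i G \<bullet> (x k - z))
          = (\<Sum>i<m. f (y i)) - real m * f (x k) - (\<Sum>i<m. wn i) / 2
             - (\<Sum>i<m. (norm (blockproj blk i a))^2) / (2 * c) + (\<Sum>i<m. blockproj blk i G) \<bullet> (x k - z)"
      by (simp add: sum.distrib sum_subtractf sum_divide_distrib inner_sum_left)
    also have "\<dots> = Q"
      unfolding Q_def bp_sum[OF blk_range] bp_norm_sum[OF blk_range] ..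
    finally show ?thesis .
  qed
  define K where "K = Lr / Lc * Lr * real \<tau> / \<alpha> + 2 * Lr * real \<tau>"
  define R where "R = (\<Sum>i<m. f (y i) - f z) - (real m - 1) * (f (x k) - f z) - (\<Sum>i<m. wn i) / 2
                     - K / 2 * T - TL / 2"
  have RQ: "R \<le> Q"
  proof -
    have "(\<Sum>i<m. f (y i) - f z) = (\<Sum>i<m. f (y i)) - real m * f z" by (simp add: sum_subtractf)
    moreover have KT: "K / 2 * T = (Lr / Lc * Lr * real \<tau> / \<alpha>) * T / 2 + Lr * real \<tau> * T"
      unfolding K_def by (simp add: field_simps)
    moreover have "(real m - 1) * (f (x k) - f z) = real m * f (x k) - real m * f z - f (x k) + f z"
      by (simp add: algebra_simps)
    ultimately show ?thesis unfolding R_def Q_def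
      using hG E1 E1' E2 TL_nn by linarith
  qed
  have fin: "(1 / real m) * R \<le> (1 / real m) * (\<Sum>i<m. blockproj blk i G \<bullet> (y i - z))"
    using RQ LQ by (intro mult_left_mono) auto
  have Req: "(1 / real m) * R = (1 / real m) * (\<Sum>i<m. f (y i) - f z)
           - (1 - 1 / real m) * (f (x k) - f z)
           - (1/2) * ((1 / real m) * (\<Sum>i<m. wn i))
           - K / (2 * real m) * T - (1 / (2 * real m)) * TL"
    using m_pos unfolding R_def by (simp add: field_simps)
  show ?thesis
    unfolding Let_def Lc_def[symmetric] D_def[symmetric] T_def[symmetric] TL_def[symmetric]
      K_def[symmetric, unfolded Lc_def] wn_def[symmetric] G_def[symmetric]
    using fin Req by (simp add: K_def Lc_def)
qed

end
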